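(* If $X$ is a discrete topological space, then $\mathrm{MG}(X)$ consists exactly of the cardinal $1$ together with all regular cardinals.
   Context: A linearly ordered Abelian group is an Abelian group with a linear order compatible with addition. For $x,y\in G_{>0}$, $x\asymp y$ iff $y\le nx$ and $x\le my$ for some $n,m\in\mathbb{Z}_{\ge1}$; $\mathrm{Arc}(G)=G_{>0}/\asymp$, ordered by $[x]\preceq[y]$ iff ($nx<y$ for all $n$) or $x\asymp y$; $\mathrm{Arc}(G)^\perp$ is $\mathrm{Arc}(G)$ with a new least element adjoined. For a bottomed linearly ordered set $S$ (least element $\perp_S$, $S^*=S\setminus\{\perp_S\}$), $\chi(S)$ is the least cardinal $\kappa>0$ such that some strictly decreasing family $(s_\alpha)_{\alpha<\kappa}$ in $S^*$ has every $t\in S^*$ bounded below by some $s_\alpha$. A $G$-metric on $X$: $d\colon X^2\to G$ with $d(x,y)=0\iff x=y$, $d\ge0$, symmetric, triangle inequality; $\mathrm{Met}(X;G)$ is the set of $G$-metrics generating the topology of $X$ via open balls of radii in $G_{>0}$. $\kappa\in\mathrm{MG}(X)$ iff some linearly ordered Abelian group $G$ with $\chi(\mathrm{Arc}(G)^\perp)=\kappa$ has $\mathrm{Met}(X;G)\ne\emptyset$. *)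

theory Defs
  imports "HOL-Analysis.Analysis"
begin

record 'g loag =
  gcar  :: "'g set"
  gadd  :: "'g \<Rightarrow> 'g \<Rightarrow> 'g"
  gzero :: "'g"
  gle   :: "'g \<Rightarrow> 'g \<Rightarrow> bool"

definition is_loag :: "'g loag \<Rightarrow> bool" where
  "is_loag G \<longleftrightarrow>
     gzero G \<in> gcar G \<and>
     (\<forall>x\<in>gcar G. \<forall>y\<in>gcar G. gadd G x y \<in> gcar G) \<and>
     (\<forall>x\<in>gcar G. \<forall>y\<in>gcar G. \<forall>z\<in>gcar G. gadd G (gadd G x y) z = gadd G x (gadd G y z)) \<and>
     (\<forall>x\<in>gcar G. \<forall>y\<in>gcar G. gadd G x y = gadd G y x) \<and>
     (\<forall>x\<in>gcar G. gadd G (gzero G) x = x) \<and>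
     (\<forall>x\<in>gcar G. \<exists>y\<in>gcar G. gadd G x y = gzero G) \<and>
     (\<forall>x\<in>gcar G. gle G x x) \<and>
     (\<forall>x\<in>gcar G. \<forall>y\<in>gcar G. gle G x y \<and> gle G y x \<longrightarrow> x = y) \<and>
     (\<forall>x\<in>gcar G. \<forall>y\<in>gcar G. \<forall>z\<in>gcar G. gle G x y \<and> gle G y z \<longrightarrow> gle G x z) \<and>
     (\<forall>x\<in>gcar G. \<forall>y\<in>gcar G. gle G x y \<or> gle G y x) \<and>
     (\<forall>x\<in>gcar G. \<forall>y\<in>gcar G. \<forall>z\<in>gcar G. gle G x y \<longrightarrow> gle G (gadd G x z) (gadd G y z))"

definition glt :: "'g loag \<Rightarrow> 'g \<Rightarrow> 'g \<Rightarrow> bool" where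
  "glt G x y \<longleftrightarrow> gle G x y \<and> x \<noteq> y"

primrec nsmul :: "'g loag \<Rightarrow> nat \<Rightarrow> 'g \<Rightarrow> 'g" where
  "nsmul G 0 x = gzero G"
| "nsmul G (Suc n) x = gadd G x (nsmul G n x)"

definition gpos :: "'g loag \<Rightarrow> 'g set" where
  "gpos G = {x \<in> gcar G. glt G (gzero G) x}"

definition arch_eq :: "'g loag \<Rightarrow> 'g \<Rightarrow> 'g \<Rightarrow> bool" where
  "arch_eq G x y \<longleftrightarrow> (\<exists>n\<ge>1. gle G y (nsmul G n x)) \<and> (\<exists>m\<ge>1. gle G x (nsmul G m y))"

definition arch_class :: "'g loag \<Rightarrow> 'g \<Rightarrow> 'g set" where
  "arch_class G x = {y \<in> gpos G. arch_eq G x y}"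

definition Arc :: "'g loag \<Rightarrow> 'g set set" where
  "Arc G = arch_class G ` gpos G"

definition arc_le :: "'g loag \<Rightarrow> 'g set \<Rightarrow> 'g set \<Rightarrow> bool" where
  "arc_le G A B \<longleftrightarrow> (\<exists>x\<in>gpos G. \<exists>y\<in>gpos G. A = arch_class G x \<and> B = arch_class G y \<and>
      ((\<forall>n\<ge>1. glt G (nsmul G n x) y) \<or> arch_eq G x y))"

text \<open>A bottomed linearly ordered set is given by a carrier, an order and its least element.
  Arc(G)^\<bottom>: Arc(G) with a new least element None adjoined.\<close>
definition Arc_bot_carrier :: "'g loag \<Rightarrow> 'g set option set" where
  "Arc_bot_carrier G = insert None (Some ` Arc G)"

fun Arc_bot_le :: "'g loag \<Rightarrow> 'g set option \<Rightarrow> 'g set option \<Rightarrow> bool" where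
  "Arc_bot_le G None _ = True"
| "Arc_bot_le G (Some A) None = False"
| "Arc_bot_le G (Some A) (Some B) = arc_le G A B"

text \<open>A cardinal \<kappa> (a cardinal well-order, indexing the family by the ordinals \<alpha> < \<kappa>)
  admits a strictly decreasing family in S* = S - {b0} such that every t in S* is
  bounded below by some member of the family.\<close>
definition coinitial_family ::
  "'s set \<Rightarrow> ('s \<Rightarrow> 's \<Rightarrow> bool) \<Rightarrow> 's \<Rightarrow> 'k rel \<Rightarrow> bool" where
  "coinitial_family S le b0 \<kappa> \<longleftrightarrow>
     (\<exists>s :: 'k \<Rightarrow> 's.
        s ` Field \<kappa> \<subseteq> S - {b0} \<and>
        (\<forall>\<alpha>\<in>Field \<kappa>. \<forall>\<beta>\<in>Field \<kappa>. (\<alpha>, \<beta>) \<in> \<kappa> \<and> \<alpha> \<noteq> \<beta> \<longrightarrow> le (s \<beta>) (s \<alpha>) \<and> s \<beta> \<noteq> s \<alpha>) \<and>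
        (\<forall>t\<in>S - {b0}. \<exists>\<alpha>\<in>Field \<kappa>. le (s \<alpha>) t))"

text \<open>Minimality is tested against cardinals carried by the type of S, which is no
  restriction since any such family embeds injectively into S.\<close>
definition is_chi :: "'s set \<Rightarrow> ('s \<Rightarrow> 's \<Rightarrow> bool) \<Rightarrow> 's \<Rightarrow> 'k rel \<Rightarrow> bool" where
  "is_chi S le b0 \<kappa> \<longleftrightarrow>
     Card_order \<kappa> \<and> Field \<kappa> \<noteq> {} \<and> coinitial_family S le b0 \<kappa> \<and>
     (\<forall>\<mu> :: 's rel. Card_order \<mu> \<and> Field \<mu> \<noteq> {} \<and> coinitial_family S le b0 \<mu> \<longrightarrow> (\<kappa>, \<mu>) \<in> ordLeq)"

definition is_gmetric :: "'g loag \<Rightarrow> 'a set \<Rightarrow> ('a \<Rightarrow> 'a \<Rightarrow> 'g) \<Rightarrow> bool" where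
  "is_gmetric G M d \<longleftrightarrow>
     (\<forall>x\<in>M. \<forall>y\<in>M. d x y \<in> gcar G) \<and>
     (\<forall>x\<in>M. \<forall>y\<in>M. d x y = gzero G \<longleftrightarrow> x = y) \<and>
     (\<forall>x\<in>M. \<forall>y\<in>M. gle G (gzero G) (d x y)) \<and>
     (\<forall>x\<in>M. \<forall>y\<in>M. d x y = d y x) \<and>
     (\<forall>x\<in>M. \<forall>y\<in>M. \<forall>z\<in>M. gle G (d x z) (gadd G (d x y) (d y z)))"

definition gball :: "'g loag \<Rightarrow> 'a set \<Rightarrow> ('a \<Rightarrow> 'a \<Rightarrow> 'g) \<Rightarrow> 'a \<Rightarrow> 'g \<Rightarrow> 'a set" where
  "gball G M d x r = {y \<in> M. glt G (d x y) r}"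

definition Met :: "'a topology \<Rightarrow> 'g loag \<Rightarrow> ('a \<Rightarrow> 'a \<Rightarrow> 'g) set" where
  "Met X G = {d. is_gmetric G (topspace X) d \<and>
     (\<forall>U. openin X U \<longleftrightarrow>
        U \<subseteq> topspace X \<and> (\<forall>x\<in>U. \<exists>r\<in>gpos G. gball G (topspace X) d x r \<subseteq> U))}"

text \<open>\<kappa> \<in> MG(X), witnessed by a linearly ordered Abelian group carried by the type 'g.\<close>
definition in_MG_via :: "'a topology \<Rightarrow> 'k rel \<Rightarrow> 'g itself \<Rightarrow> bool" where
  "in_MG_via X \<kappa> _ \<longleftrightarrow>
     (\<exists>(G :: 'g loag) (c :: 'g set option rel).
        is_loag G \<and> is_chi (Arc_bot_carrier G) (Arc_bot_le G) None c \<and> (c, \<kappa>) \<in> ordIso \<and>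
        Met X G \<noteq> {})"

end

theory Submission
  imports Defs
begin

context includes cardinal_syntax begin

lemma Restr_ordLeq_sub:
  assumes W: "Well_order r" and A: "A \<subseteq> Field r"
  shows "Restr r A \<le>o r"
proof (rule ccontr)
  assume "\<not> Restr r A \<le>o r"
  hence "r <o Restr r A" using ordLess_or_ordLeq[OF W Well_order_Restr[OF W]] by blast
  then obtain a where a: "a \<in> Field (Restr r A)" and iso0: "r =o Restr (Restr r A) (underS (Restr r A) a)"
    using ordLess_iff_ordIso_Restr[OF Well_order_Restr[OF W] W] by blast
  let ?r' = "Restr (Restr r A) (underS (Restr r A) a)"
  obtain f where iso: "iso r ?r' f" using iso0 unfolding ordIso_def by blast
  have W': "Well_order ?r'" using Well_order_Restr[OF Well_order_Restr[OF W]] .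
  have bij: "bij_betw f (Field r) (Field ?r')" and cp: "compat r ?r' f"
    using iso iso_iff3[OF W W'] by auto
  have lin: "Linear_order r" using W unfolding well_order_on_def by auto
  have refl: "Refl r" and tr: "trans r" and an: "antisym r" and tot: "Total r"
    using W unfolding well_order_on_def linear_order_on_def partial_order_on_def preorder_on_def by auto
  have fF: "f x \<in> Field r" if "x \<in> Field r" for x
  proof -
    have "f x \<in> Field ?r'" using bij that unfolding bij_betw_def by auto
    moreover have "Field ?r' \<subseteq> Field (Restr r A)" by (auto simp: Field_def)
    ultimately show ?thesis using Field_Restr_subset[of r A] A by blast
  qed
  have fr: "(f x, f y) \<in> r" if "(x,y) \<in> r" for x y
    using cp that unfolding compat_def by auto
  have inj: "inj_on f (Field r)" using bij unfolding bij_betw_def by auto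
  have ge: "(x, f x) \<in> r" if x: "x \<in> Field r" for x
  proof (rule ccontr)
    assume nx: "(x, f x) \<notin> r"
    let ?B = "{x \<in> Field r. (x, f x) \<notin> r}"
    have "wf (r - Id)" using W unfolding well_order_on_def by auto
    then obtain m where m: "m \<in> ?B" and mmin: "\<And>y. (y, m) \<in> r - Id \<Longrightarrow> y \<notin> ?B"
      using wf_eq_minimal[THEN iffD1, rule_format, of "r - Id" x ?B] x nx by blast
    have mF: "m \<in> Field r" using m by auto
    have fmF: "f m \<in> Field r" using fF mF .
    have fmm: "f m \<noteq> m" using m refl mF by (auto dest: refl_onD)
    have "(f m, m) \<in> r" using m tot fmF mF fmm unfolding total_on_def by blast
    moreover note fmm
    ultimately have "f m \<notin> ?B" using mmin by auto
    hence "(f m, f (f m)) \<in> r" using fmF by auto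
    moreover have "(f (f m), f m) \<in> r" using fr \<open>(f m, m) \<in> r\<close> .
    ultimately have "f (f m) = f m" using an unfolding antisym_def by blast
    hence "f m = m" using inj fmF mF unfolding inj_on_def by blast
    thus False using \<open>f m \<noteq> m\<close> by simp
  qed
  have aA: "a \<in> Field r" using a A Field_Restr_subset[of r A] by blast
  have "f a \<in> Field ?r'" using bij aA unfolding bij_betw_def by auto
  hence "f a \<in> underS (Restr r A) a" using Field_Restr_subset[of "Restr r A" "underS (Restr r A) a"] by blast
  hence "(f a, a) \<in> r" "f a \<noteq> a" unfolding underS_def by auto
  moreover have "(a, f a) \<in> r" using ge aA .
  ultimately show False using an unfolding antisym_def by blast
qed


lemma finite_wo_max:
  assumes W: "Well_order r" and fin: "finite (Field r)" and ne: "Field r \<noteq> {}"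
  shows "\<exists>m\<in>Field r. \<forall>a\<in>Field r. (a,m) \<in> r"
proof -
  have refl: "Refl r" and tr: "trans r" and an: "antisym r" and tot: "Total r"
    using W unfolding well_order_on_def linear_order_on_def partial_order_on_def preorder_on_def by auto
  have "r \<subseteq> Field r \<times> Field r" by (auto intro: FieldI1 FieldI2)
  hence "finite r" using fin finite_subset[OF _ finite_cartesian_product[OF fin fin]] by blast
  hence fr: "finite ((r - Id)\<inverse>)" by auto
  have "trans (r - Id)" using tr an unfolding trans_def antisym_def by blast
  hence "(r - Id)\<^sup>+ = r - Id" by simp
  hence "acyclic ((r - Id)\<inverse>)" unfolding acyclic_def by (simp add: trancl_converse)
  hence wf: "wf ((r - Id)\<inverse>)" using fr finite_acyclic_wf by blast
  obtain x where x: "x \<in> Field r" using ne by auto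
  then obtain m where m: "m \<in> Field r" and mmin: "\<And>y. (y, m) \<in> (r - Id)\<inverse> \<Longrightarrow> y \<notin> Field r"
    using wf_eq_minimal[THEN iffD1, rule_format, OF wf, of x "Field r"] by blast
  have "\<forall>a\<in>Field r. (a,m) \<in> r"
  proof
    fix a assume a: "a \<in> Field r"
    show "(a,m) \<in> r"
    proof (cases "a = m")
      case True thus ?thesis using refl m by (auto dest: refl_onD)
    next
      case False
      hence "(m,a) \<notin> r" using mmin a by auto
      thus ?thesis using tot a m False unfolding total_on_def by blast
    qed
  qed
  thus ?thesis using m by blast
qed

lemma chi_cases:
  fixes S :: "'s set" and c :: "'s rel"
  assumes trans: "\<And>a b d. a \<in> S - {b0} \<Longrightarrow> b \<in> S - {b0} \<Longrightarrow> d \<in> S - {b0} \<Longrightarrow> le a b \<Longrightarrow> le b d \<Longrightarrow> le a d"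
    and chi: "is_chi S le b0 c"
  shows "(finite (Field c) \<and> card (Field c) = 1) \<or> (infinite (Field c) \<and> regularCard c)"
proof -
  have CO: "Card_order c" and ne: "Field c \<noteq> {}" and fam: "coinitial_family S le b0 c"
    and minim: "\<And>\<mu> :: 's rel. Card_order \<mu> \<Longrightarrow> Field \<mu> \<noteq> {} \<Longrightarrow> coinitial_family S le b0 \<mu> \<Longrightarrow> c \<le>o \<mu>"
    using chi unfolding is_chi_def by auto
  obtain s where sS: "s ` Field c \<subseteq> S - {b0}"
    and sdec0: "\<forall>\<alpha>\<in>Field c. \<forall>\<beta>\<in>Field c. (\<alpha>, \<beta>) \<in> c \<and> \<alpha> \<noteq> \<beta> \<longrightarrow> le (s \<beta>) (s \<alpha>) \<and> s \<beta> \<noteq> s \<alpha>"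
    and scoin0: "\<forall>t\<in>S - {b0}. \<exists>\<alpha>\<in>Field c. le (s \<alpha>) t"
    using fam unfolding coinitial_family_def by (elim exE conjE) blast
  have sdec: "\<And>\<alpha> \<beta>. \<alpha>\<in>Field c \<Longrightarrow> \<beta>\<in>Field c \<Longrightarrow> (\<alpha>, \<beta>) \<in> c \<Longrightarrow> \<alpha> \<noteq> \<beta> \<Longrightarrow> le (s \<beta>) (s \<alpha>) \<and> s \<beta> \<noteq> s \<alpha>"
    using sdec0 by blast
  have scoin: "\<And>t. t \<in> S - {b0} \<Longrightarrow> \<exists>\<alpha>\<in>Field c. le (s \<alpha>) t" using scoin0 by blast
  have W: "Well_order c" using CO unfolding card_order_on_def by auto
  have refl: "Refl c" and tr: "Relation.trans c" and an: "antisym c" and tot: "Total c"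
    using W unfolding well_order_on_def linear_order_on_def partial_order_on_def preorder_on_def by auto
  show ?thesis
  proof (cases "\<exists>m\<in>S - {b0}. \<forall>t\<in>S - {b0}. le m t")
    case True
    then obtain m where m: "m \<in> S - {b0}" and mle: "\<forall>t\<in>S - {b0}. le m t" by blast
    let ?\<mu> = "|{m}|"
    have "coinitial_family S le b0 ?\<mu>"
      unfolding coinitial_family_def Field_card_of
      by (rule exI[of _ "\<lambda>_. m"]) (use m mle in auto)
    hence "c \<le>o ?\<mu>" using minim card_of_Card_order Field_card_of by (metis insert_not_empty)
    hence "|Field c| \<le>o |{m}|" using card_of_mono2 Field_card_of by metis
    hence "\<exists>f. inj_on f (Field c) \<and> f ` Field c \<subseteq> {m}" using card_of_ordLeq[of "Field c" "{m}"] by (rule iffD2[rotated])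
    then obtain f where f1: "inj_on f (Field c)" and f2: "f ` Field c \<subseteq> {m}" by (elim exE conjE)
    have "card (Field c) \<le> card {m}" using card_inj_on_le[OF f1 f2] by simp
    moreover have "finite (Field c)" using inj_on_finite[OF f1 f2] by simp
    ultimately have "card (Field c) \<le> card {m}" "finite (Field c)" by blast+
    moreover have "card (Field c) > 0" using ne \<open>finite (Field c)\<close> by (simp add: card_gt_0_iff)
    ultimately have "finite (Field c) \<and> card (Field c) = 1" by simp
    thus ?thesis by blast
  next
    case False
    hence nomin: "\<And>m. m \<in> S - {b0} \<Longrightarrow> \<exists>t\<in>S - {b0}. \<not> le m t" by blast
    have inf: "infinite (Field c)"
    proof
      assume fin: "finite (Field c)"
      then obtain \<beta> where \<beta>: "\<beta> \<in> Field c" and bmax: "\<forall>a\<in>Field c. (a,\<beta>) \<in> c"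
        using finite_wo_max[OF W fin ne] by blast
      have "s \<beta> \<in> S - {b0}" using sS \<beta> by auto
      then obtain t where t: "t \<in> S - {b0}" "\<not> le (s \<beta>) t" using nomin by blast
      then obtain \<alpha> where \<alpha>: "\<alpha> \<in> Field c" "le (s \<alpha>) t" using scoin by blast
      show False
      proof (cases "\<alpha> = \<beta>")
        case True thus False using \<alpha> t by auto
      next
        case False
        hence "le (s \<beta>) (s \<alpha>)" using sdec \<alpha> \<beta> bmax by blast
        hence "le (s \<beta>) t" using trans[of "s \<beta>" "s \<alpha>" t] sS \<alpha> \<beta> t by auto
        thus False using t by auto
      qed
    qed
    have "regularCard c" unfolding regularCard_def
    proof (intro allI impI)
      fix K assume K: "K \<subseteq> Field c \<and> cofinal K c"
      let ?R = "{|K'| | K'. K' \<subseteq> Field c \<and> cofinal K' c}"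
      have Rne: "?R \<noteq> {}" using K by auto
      have Rwo: "\<forall>r\<in>?R. Well_order r" using card_of_Well_order by auto
      have "\<exists>r\<in>?R. \<forall>r'\<in>?R. r \<le>o r'" using exists_minim_Well_order[OF Rne Rwo] .
      then obtain r0 where "r0 \<in> ?R" and r0min: "\<forall>r'\<in>?R. r0 \<le>o r'" by (elim bexE)
      then obtain K0 where K0: "K0 \<subseteq> Field c" "cofinal K0 c" and r0: "r0 = |K0|" by blast
      have K0min: "\<And>K'. K' \<subseteq> Field c \<Longrightarrow> cofinal K' c \<Longrightarrow> |K0| \<le>o |K'|"
        using r0min r0 by blast
      let ?l = "|K0|"
      have Wl: "Well_order ?l" by (rule card_of_Well_order)
      have Fl: "Field ?l = K0" by (rule Field_card_of)
      have lrefl: "Refl ?l" and lan: "antisym ?l" and ltot: "Total ?l"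
        using Wl unfolding well_order_on_def linear_order_on_def partial_order_on_def preorder_on_def by auto
      define T where "T = {k \<in> K0. \<forall>k'\<in>K0. (k',k) \<in> ?l \<and> k' \<noteq> k \<longrightarrow> (k',k) \<in> c}"
      have TK0: "T \<subseteq> K0" unfolding T_def by auto
      have Tcof: "cofinal T c" unfolding cofinal_def
      proof
        fix a assume a: "a \<in> Field c"
        let ?U = "{k \<in> K0. (a,k) \<in> c \<and> a \<noteq> k}"
        obtain k where k: "k \<in> ?U" using K0(2) a unfolding cofinal_def by blast
        have "wf (?l - Id)" using Wl unfolding well_order_on_def by auto
        then obtain m where m: "m \<in> ?U" and mmin: "\<And>y. (y, m) \<in> ?l - Id \<Longrightarrow> y \<notin> ?U"
          using wf_eq_minimal[THEN iffD1, rule_format, of "?l - Id" k ?U] k by blast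
        have "m \<in> T" unfolding T_def
        proof (safe)
          show "m \<in> K0" using m by auto
        next
          fix k' assume k': "k' \<in> K0" "(k', m) \<in> ?l" "k' \<noteq> m"
          hence "k' \<notin> ?U" using mmin by auto
          hence "(k', a) \<in> c"
          proof (cases "a = k'")
            case True thus ?thesis using refl a by (auto dest: refl_onD)
          next
            case False
            thus ?thesis using \<open>k' \<notin> ?U\<close> k' K0(1) a tot unfolding total_on_def by blast
          qed
          thus "(k', m) \<in> c" using m tr unfolding trans_def by blast
        qed
        thus "\<exists>b\<in>T. a \<noteq> b \<and> (a, b) \<in> c" using m by blast
      qed
      have TF: "T \<subseteq> Field c" using TK0 K0 by auto
      have RR: "Restr c T = Restr ?l T"
      proof (intro set_eqI iffI)
        fix p assume p: "p \<in> Restr c T"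
        obtain x y where xy: "p = (x,y)" "x \<in> T" "y \<in> T" "(x,y) \<in> c" using p by auto
        show "p \<in> Restr ?l T"
        proof (cases "x = y")
          case True thus ?thesis using xy lrefl TK0 Fl by (auto dest: refl_onD)
        next
          case False
          show ?thesis
          proof (rule ccontr)
            assume "p \<notin> Restr ?l T"
            hence "(y,x) \<in> ?l" using xy ltot TK0 Fl False unfolding total_on_def by blast
            hence "(y,x) \<in> c" using xy TK0 False unfolding T_def by blast
            thus False using xy an False unfolding antisym_def by blast
          qed
        qed
      next
        fix p assume p: "p \<in> Restr ?l T"
        obtain x y where xy: "p = (x,y)" "x \<in> T" "y \<in> T" "(x,y) \<in> ?l" using p by auto
        show "p \<in> Restr c T"
        proof (cases "x = y")
          case True thus ?thesis using xy refl TF by (auto dest: refl_onD)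
        next
          case False
          hence "(x,y) \<in> c" using xy TK0 unfolding T_def by blast
          thus ?thesis using xy by auto
        qed
      qed
      let ?w = "Restr c T"
      have Ww: "Well_order ?w" using Well_order_Restr[OF W] .
      have Fw: "Field ?w = T" using Refl_Field_Restr2[OF refl TF] .
      have Tne: "T \<noteq> {}" using Tcof ne unfolding cofinal_def by blast
      have "?w \<le>o ?l" using RR Restr_ordLeq_sub[OF Wl] TK0 Fl by simp
      also have "?l \<le>o |T|" using K0min[OF TF Tcof] .
      finally have wT: "?w \<le>o |Field ?w|" using Fw by simp
      have COw: "Card_order ?w" using wT Card_order_iff_ordLeq_card_of by blast
      have "coinitial_family S le b0 ?w" unfolding coinitial_family_def
      proof (rule exI[of _ s], intro conjI)
        show "s ` Field ?w \<subseteq> S - {b0}" using sS Fw TF by auto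
      next
        show "\<forall>\<alpha>\<in>Field ?w. \<forall>\<beta>\<in>Field ?w. (\<alpha>, \<beta>) \<in> ?w \<and> \<alpha> \<noteq> \<beta> \<longrightarrow> le (s \<beta>) (s \<alpha>) \<and> s \<beta> \<noteq> s \<alpha>"
          using sdec Fw TF by auto
      next
        show "\<forall>t\<in>S - {b0}. \<exists>\<alpha>\<in>Field ?w. le (s \<alpha>) t"
        proof
        fix t assume t: "t \<in> S - {b0}"
        then obtain \<alpha> where \<alpha>: "\<alpha> \<in> Field c" "le (s \<alpha>) t" using scoin by blast
        then obtain \<beta> where \<beta>: "\<beta> \<in> T" "\<alpha> \<noteq> \<beta>" "(\<alpha>, \<beta>) \<in> c" using Tcof unfolding cofinal_def by blast
        have "le (s \<beta>) (s \<alpha>)" using sdec \<alpha> \<beta> TF by blast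
        hence "le (s \<beta>) t" using trans[of "s \<beta>" "s \<alpha>" t] sS \<alpha> \<beta> TF t by auto
        thus "\<exists>\<alpha>\<in>Field ?w. le (s \<alpha>) t" using \<beta> Fw by blast
        qed
      qed
      hence "c \<le>o ?w" using minim COw Fw Tne by blast
      also have "?w \<le>o ?l" using RR Restr_ordLeq_sub[OF Wl] TK0 Fl by simp
      also have "?l \<le>o |K|" using K0min K by blast
      finally have "c \<le>o |K|" .
      moreover have "|K| \<le>o c" using card_of_mono1[of K "Field c"] K card_of_Field_ordIso[OF CO]
        ordLeq_ordIso_trans by blast
      ultimately show "|K| =o c" using ordIso_iff_ordLeq by blast
    qed
    thus ?thesis using inf by blast
  qed
qed

end



context
  fixes G :: "'g loag"
  assumes lg: "is_loag G"
begin

lemma lgc: "gzero G \<in> gcar G \<and>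
     (\<forall>x\<in>gcar G. \<forall>y\<in>gcar G. gadd G x y \<in> gcar G) \<and>
     (\<forall>x\<in>gcar G. \<forall>y\<in>gcar G. \<forall>z\<in>gcar G. gadd G (gadd G x y) z = gadd G x (gadd G y z)) \<and>
     (\<forall>x\<in>gcar G. \<forall>y\<in>gcar G. gadd G x y = gadd G y x) \<and>
     (\<forall>x\<in>gcar G. gadd G (gzero G) x = x) \<and>
     (\<forall>x\<in>gcar G. \<exists>y\<in>gcar G. gadd G x y = gzero G) \<and>
     (\<forall>x\<in>gcar G. gle G x x) \<and>
     (\<forall>x\<in>gcar G. \<forall>y\<in>gcar G. gle G x y \<and> gle G y x \<longrightarrow> x = y) \<and>
     (\<forall>x\<in>gcar G. \<forall>y\<in>gcar G. \<forall>z\<in>gcar G. gle G x y \<and> gle G y z \<longrightarrow> gle G x z) \<and>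
     (\<forall>x\<in>gcar G. \<forall>y\<in>gcar G. gle G x y \<or> gle G y x) \<and>
     (\<forall>x\<in>gcar G. \<forall>y\<in>gcar G. \<forall>z\<in>gcar G. gle G x y \<longrightarrow> gle G (gadd G x z) (gadd G y z))"
  using lg unfolding is_loag_def .

lemma lg_zero: "gzero G \<in> gcar G" using lgc by (elim conjE)
lemma lg_add: "x \<in> gcar G \<Longrightarrow> y \<in> gcar G \<Longrightarrow> gadd G x y \<in> gcar G"
proof - assume a: "x \<in> gcar G" "y \<in> gcar G"
  have "\<forall>x\<in>gcar G. \<forall>y\<in>gcar G. gadd G x y \<in> gcar G" using lgc by (elim conjE)
  thus ?thesis using a by simp qed
lemma lg_assoc: "x \<in> gcar G \<Longrightarrow> y \<in> gcar G \<Longrightarrow> z \<in> gcar G \<Longrightarrow> gadd G (gadd G x y) z = gadd G x (gadd G y z)"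
proof - assume a: "x \<in> gcar G" "y \<in> gcar G" "z \<in> gcar G"
  have "\<forall>x\<in>gcar G. \<forall>y\<in>gcar G. \<forall>z\<in>gcar G. gadd G (gadd G x y) z = gadd G x (gadd G y z)" using lgc by (elim conjE)
  thus ?thesis using a by simp qed
lemma lg_comm: "x \<in> gcar G \<Longrightarrow> y \<in> gcar G \<Longrightarrow> gadd G x y = gadd G y x"
proof - assume a: "x \<in> gcar G" "y \<in> gcar G"
  have "\<forall>x\<in>gcar G. \<forall>y\<in>gcar G. gadd G x y = gadd G y x" using lgc by (elim conjE)
  thus ?thesis using a by simp qed
lemma lg_lid: "x \<in> gcar G \<Longrightarrow> gadd G (gzero G) x = x"
proof - assume a: "x \<in> gcar G"
  have "\<forall>x\<in>gcar G. gadd G (gzero G) x = x" using lgc by (elim conjE)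
  thus ?thesis using a by simp qed
lemma lg_refl: "x \<in> gcar G \<Longrightarrow> gle G x x"
proof - assume a: "x \<in> gcar G"
  have "\<forall>x\<in>gcar G. gle G x x" using lgc by (elim conjE)
  thus ?thesis using a by simp qed
lemma lg_antisym: "x \<in> gcar G \<Longrightarrow> y \<in> gcar G \<Longrightarrow> gle G x y \<Longrightarrow> gle G y x \<Longrightarrow> x = y"
proof - assume a: "x \<in> gcar G" "y \<in> gcar G" "gle G x y" "gle G y x"
  have "\<forall>x\<in>gcar G. \<forall>y\<in>gcar G. gle G x y \<and> gle G y x \<longrightarrow> x = y" using lgc by (elim conjE)
  thus ?thesis using a by simp qed
lemma lg_trans: "x \<in> gcar G \<Longrightarrow> y \<in> gcar G \<Longrightarrow> z \<in> gcar G \<Longrightarrow> gle G x y \<Longrightarrow> gle G y z \<Longrightarrow> gle G x z"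
proof - assume a: "x \<in> gcar G" "y \<in> gcar G" "z \<in> gcar G" "gle G x y" "gle G y z"
  have "\<forall>x\<in>gcar G. \<forall>y\<in>gcar G. \<forall>z\<in>gcar G. gle G x y \<and> gle G y z \<longrightarrow> gle G x z" using lgc by (elim conjE)
  thus ?thesis using a by blast qed
lemma lg_total: "x \<in> gcar G \<Longrightarrow> y \<in> gcar G \<Longrightarrow> gle G x y \<or> gle G y x"
proof - assume a: "x \<in> gcar G" "y \<in> gcar G"
  have "\<forall>x\<in>gcar G. \<forall>y\<in>gcar G. gle G x y \<or> gle G y x" using lgc by (elim conjE)
  thus ?thesis using a by simp qed
lemma lg_compat: "x \<in> gcar G \<Longrightarrow> y \<in> gcar G \<Longrightarrow> z \<in> gcar G \<Longrightarrow> gle G x y \<Longrightarrow> gle G (gadd G x z) (gadd G y z)"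
proof - assume a: "x \<in> gcar G" "y \<in> gcar G" "z \<in> gcar G" "gle G x y"
  have "\<forall>x\<in>gcar G. \<forall>y\<in>gcar G. \<forall>z\<in>gcar G. gle G x y \<longrightarrow> gle G (gadd G x z) (gadd G y z)" using lgc by (elim conjE)
  thus ?thesis using a by blast qed

lemma ns_closed: "x \<in> gcar G \<Longrightarrow> nsmul G n x \<in> gcar G"
  by (induction n) (auto simp: lg_zero lg_add)

lemma ns_one: "x \<in> gcar G \<Longrightarrow> nsmul G 1 x = x"
proof -
  assume x: "x \<in> gcar G"
  have "gadd G x (gzero G) = gadd G (gzero G) x" using lg_comm[OF x lg_zero] .
  thus ?thesis using lg_lid[OF x] by simp
qed

lemma ns_add: "x \<in> gcar G \<Longrightarrow> nsmul G (m + n) x = gadd G (nsmul G m x) (nsmul G n x)"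
  by (induction m) (auto simp: lg_lid ns_closed lg_assoc)

lemma ns_mult: "x \<in> gcar G \<Longrightarrow> nsmul G (m * n) x = nsmul G m (nsmul G n x)"
proof (induction m)
  case 0 then show ?case by simp
next
  case (Suc m)
  have "nsmul G (Suc m * n) x = nsmul G (n + m * n) x" by simp
  also have "\<dots> = gadd G (nsmul G n x) (nsmul G (m * n) x)" using ns_add Suc by blast
  finally show ?case using Suc by simp
qed

lemma ns_mono: "a \<in> gcar G \<Longrightarrow> b \<in> gcar G \<Longrightarrow> gle G a b \<Longrightarrow> gle G (nsmul G n a) (nsmul G n b)"
proof (induction n)
  case 0 then show ?case by (simp add: lg_refl lg_zero)
next
  case (Suc n)
  have 1: "gle G (gadd G a (nsmul G n a)) (gadd G b (nsmul G n a))"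
    using lg_compat Suc ns_closed by blast
  have "gle G (gadd G (nsmul G n a) b) (gadd G (nsmul G n b) b)"
    using lg_compat Suc ns_closed by blast
  hence 2: "gle G (gadd G b (nsmul G n a)) (gadd G b (nsmul G n b))"
    using lg_comm Suc ns_closed by metis
  show ?case using lg_trans[OF _ _ _ 1 2] Suc ns_closed lg_add by simp
qed

lemma R_trans:
  assumes "x \<in> gcar G" "y \<in> gcar G" "z \<in> gcar G"
    "gle G x (nsmul G m y)" "gle G y (nsmul G k z)"
  shows "gle G x (nsmul G (m * k) z)"
proof -
  have "gle G (nsmul G m y) (nsmul G m (nsmul G k z))" using ns_mono assms ns_closed by blast
  hence "gle G (nsmul G m y) (nsmul G (m * k) z)" using ns_mult assms by simp
  thus ?thesis using lg_trans assms ns_closed by blast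
qed

lemma gpos_car: "x \<in> gpos G \<Longrightarrow> x \<in> gcar G" unfolding gpos_def by auto

lemma arch_eq_refl: "x \<in> gcar G \<Longrightarrow> arch_eq G x x"
  unfolding arch_eq_def using ns_one lg_refl by (metis order_refl)

lemma class_eq_arch: "x \<in> gpos G \<Longrightarrow> y \<in> gpos G \<Longrightarrow> arch_class G x = arch_class G y \<Longrightarrow> arch_eq G x y"
proof -
  assume a: "x \<in> gpos G" "y \<in> gpos G" "arch_class G x = arch_class G y"
  have "y \<in> arch_class G y" unfolding arch_class_def using a arch_eq_refl gpos_car by auto
  thus ?thesis using a unfolding arch_class_def by auto
qed

lemma Rel_imp: "x \<in> gcar G \<Longrightarrow> y \<in> gcar G \<Longrightarrow> (\<forall>n\<ge>1. glt G (nsmul G n x) y) \<or> arch_eq G x y \<Longrightarrow> \<exists>m\<ge>1. gle G x (nsmul G m y)"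
  unfolding arch_eq_def glt_def using ns_one by (metis order_refl)

lemma Rel_intro:
  assumes "x \<in> gcar G" "y \<in> gcar G" "m \<ge> 1" "gle G x (nsmul G m y)"
  shows "(\<forall>n\<ge>1. glt G (nsmul G n x) y) \<or> arch_eq G x y"
proof (cases "\<exists>n\<ge>1. gle G y (nsmul G n x)")
  case True thus ?thesis unfolding arch_eq_def using assms by blast
next
  case False
  have "\<forall>n\<ge>1. glt G (nsmul G n x) y"
  proof (intro allI impI)
    fix n :: nat assume n: "n \<ge> 1"
    hence "\<not> gle G y (nsmul G n x)" using False by blast
    moreover hence "gle G (nsmul G n x) y" using lg_total ns_closed assms by blast
    ultimately show "glt G (nsmul G n x) y" unfolding glt_def using lg_refl assms by blast
  qed
  thus ?thesis by blast
qed

lemma arc_le_imp: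
  assumes "arc_le G A B" "A = arch_class G x" "B = arch_class G y" "x \<in> gpos G" "y \<in> gpos G"
  shows "\<exists>m\<ge>1. gle G x (nsmul G m y)"
proof -
  obtain x' y' where xy: "x' \<in> gpos G" "y' \<in> gpos G" "A = arch_class G x'" "B = arch_class G y'"
    "(\<forall>n\<ge>1. glt G (nsmul G n x') y') \<or> arch_eq G x' y'"
    using assms(1) unfolding arc_le_def by blast
  obtain m where m: "m \<ge> 1" "gle G x' (nsmul G m y')" using Rel_imp xy gpos_car by blast
  have "arch_eq G x x'" using class_eq_arch assms xy by metis
  then obtain n where n: "n \<ge> 1" "gle G x (nsmul G n x')" unfolding arch_eq_def by blast
  have "arch_eq G y' y" using class_eq_arch assms xy by metis
  then obtain k where k: "k \<ge> 1" "gle G y' (nsmul G k y)" unfolding arch_eq_def by blast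
  have "gle G x (nsmul G (n * m) y')" using R_trans n m xy assms gpos_car by blast
  hence "gle G x (nsmul G (n * m * k) y)" using R_trans k xy assms gpos_car by blast
  moreover have "n * m * k \<ge> 1" using n m k by simp
  ultimately show ?thesis by blast
qed

lemma arc_le_intro:
  assumes "x \<in> gpos G" "y \<in> gpos G" "m \<ge> 1" "gle G x (nsmul G m y)"
  shows "arc_le G (arch_class G x) (arch_class G y)"
  unfolding arc_le_def using Rel_intro assms gpos_car by blast

lemma Arc_bot_trans:
  assumes "a \<in> Arc_bot_carrier G - {None}" "b \<in> Arc_bot_carrier G - {None}" "d \<in> Arc_bot_carrier G - {None}"
    "Arc_bot_le G a b" "Arc_bot_le G b d"
  shows "Arc_bot_le G a d"
proof -
  obtain x y z where xyz: "x \<in> gpos G" "y \<in> gpos G" "z \<in> gpos G"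
    "a = Some (arch_class G x)" "b = Some (arch_class G y)" "d = Some (arch_class G z)"
    using assms(1-3) unfolding Arc_bot_carrier_def Arc_def by auto
  have a1: "arc_le G (arch_class G x) (arch_class G y)" using assms(4) xyz by simp
  have a2: "arc_le G (arch_class G y) (arch_class G z)" using assms(5) xyz by simp
  obtain m where m: "m \<ge> 1" "gle G x (nsmul G m y)" using arc_le_imp[OF a1 refl refl xyz(1,2)] by blast
  obtain k where k: "k \<ge> 1" "gle G y (nsmul G k z)" using arc_le_imp[OF a2 refl refl xyz(2,3)] by blast
  have g: "gle G x (nsmul G (m * k) z)" using R_trans m k xyz gpos_car by blast
  have mk: "m * k \<ge> 1" using m k by simp
  have "arc_le G (arch_class G x) (arch_class G z)" using arc_le_intro[OF xyz(1) xyz(3) mk g] .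
  thus ?thesis using xyz by simp
qed

end



definition posk :: "'k rel \<Rightarrow> ('k \<Rightarrow> int) \<Rightarrow> bool" where
  "posk K x \<longleftrightarrow> (\<exists>i. x i > 0 \<and> (\<forall>j. x j \<noteq> 0 \<longrightarrow> (i,j) \<in> K))"

definition ldk :: "'k rel \<Rightarrow> ('k \<Rightarrow> int) \<Rightarrow> 'k \<Rightarrow> bool" where
  "ldk K x i \<longleftrightarrow> x i > 0 \<and> (\<forall>j. x j \<noteq> 0 \<longrightarrow> (i,j) \<in> K)"

definition Gk :: "'k rel \<Rightarrow> ('k \<Rightarrow> int) loag" where
  "Gk K = \<lparr>gcar = {x. \<forall>i. x i \<noteq> 0 \<longrightarrow> i \<in> Field K}, gadd = (\<lambda>x y i. x i + y i),
     gzero = (\<lambda>i. 0), gle = (\<lambda>x y. x = y \<or> posk K (\<lambda>i. y i - x i))\<rparr>"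

definition ek :: "'k \<Rightarrow> 'k \<Rightarrow> int" where
  "ek a = (\<lambda>i. if i = a then 1 else 0)"

lemma Gk_simps[simp]:
  "gcar (Gk K) = {x. \<forall>i. x i \<noteq> 0 \<longrightarrow> i \<in> Field K}"
  "gadd (Gk K) = (\<lambda>x y i. x i + y i)"
  "gzero (Gk K) = (\<lambda>i. 0)"
  "gle (Gk K) x y = (x = y \<or> posk K (\<lambda>i. y i - x i))"
  unfolding Gk_def by auto

lemma posk_ldk: "posk K x \<longleftrightarrow> (\<exists>i. ldk K x i)"
  unfolding posk_def ldk_def by auto

context
  fixes K :: "'k rel"
  assumes W: "Well_order K"
begin

lemma K_refl: "Refl K" and K_trans: "trans K" and K_an: "antisym K" and K_tot: "Total K"
  using W unfolding well_order_on_def linear_order_on_def partial_order_on_def preorder_on_def by auto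

lemma ldk_field: "ldk K x i \<Longrightarrow> i \<in> Field K"
  unfolding ldk_def by (metis FieldI1 less_irrefl)

lemma K_antisym': "(i,j) \<in> K \<Longrightarrow> (j,i) \<in> K \<Longrightarrow> i = j"
  using K_an unfolding antisym_def by blast

lemma K_trans': "(i,j) \<in> K \<Longrightarrow> (j,l) \<in> K \<Longrightarrow> (i,l) \<in> K"
  using K_trans unfolding trans_def by blast

lemma K_total': "i \<in> Field K \<Longrightarrow> j \<in> Field K \<Longrightarrow> (i,j) \<in> K \<or> (j,i) \<in> K"
  using K_tot K_refl unfolding total_on_def by (metis refl_onD)

lemma K_refl': "i \<in> Field K \<Longrightarrow> (i,i) \<in> K"
  using K_refl by (auto dest: refl_onD)

lemma posk_add:
  assumes "posk K a" "posk K b" shows "posk K (\<lambda>i. a i + b i)"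
proof -
  obtain i where i: "ldk K a i" using assms posk_ldk by metis
  obtain j where j: "ldk K b j" using assms posk_ldk by metis
  have iF: "i \<in> Field K" and jF: "j \<in> Field K" using i j ldk_field by auto
  show ?thesis
  proof (cases "(i,j) \<in> K")
    case True
    have bi: "b i \<ge> 0"
    proof (rule ccontr)
      assume "\<not> b i \<ge> 0"
      hence "(j,i) \<in> K" using j unfolding ldk_def by auto
      hence "i = j" using True K_antisym' by blast
      thus False using j \<open>\<not> b i \<ge> 0\<close> unfolding ldk_def by auto
    qed
    have "ldk K (\<lambda>i. a i + b i) i" unfolding ldk_def
      using i j bi True K_trans' unfolding ldk_def by (auto, metis add.right_neutral)
    thus ?thesis using posk_ldk by metis
  next
    case False
    hence True: "(j,i) \<in> K" using K_total' iF jF by blast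
    have ai: "a j \<ge> 0"
    proof (rule ccontr)
      assume "\<not> a j \<ge> 0"
      hence "(i,j) \<in> K" using i unfolding ldk_def by auto
      thus False using False by blast
    qed
    have "ldk K (\<lambda>i. a i + b i) j" unfolding ldk_def
      using i j ai True K_trans' unfolding ldk_def by (auto, metis add.left_neutral)
    thus ?thesis using posk_ldk by metis
  qed
qed

lemma posk_neg: "posk K a \<Longrightarrow> posk K (\<lambda>i. - a i) \<Longrightarrow> False"
proof -
  assume "posk K a" "posk K (\<lambda>i. - a i)"
  then obtain i j where i: "ldk K a i" and j: "ldk K (\<lambda>i. - a i) j" using posk_ldk by metis
  have "(i,j) \<in> K" using i j unfolding ldk_def by auto
  moreover have "(j,i) \<in> K" using i j unfolding ldk_def by auto
  ultimately have "i = j" using K_antisym' by blast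
  thus False using i j unfolding ldk_def by auto
qed

lemma posk_total:
  assumes x: "\<forall>i. x i \<noteq> 0 \<longrightarrow> i \<in> Field K" and nz: "x \<noteq> (\<lambda>i. 0)"
  shows "posk K x \<or> posk K (\<lambda>i. - x i)"
proof -
  let ?U = "{i. x i \<noteq> 0}"
  obtain k where k: "x k \<noteq> 0" using nz by auto
  have "wf (K - Id)" using W unfolding well_order_on_def by auto
  then obtain m where m: "m \<in> ?U" and mmin: "\<And>y. (y, m) \<in> K - Id \<Longrightarrow> y \<notin> ?U"
    using wf_eq_minimal[THEN iffD1, rule_format, of "K - Id" k ?U] k by blast
  have below: "(m,j) \<in> K" if "x j \<noteq> 0" for j
  proof -
    have "j \<in> Field K" "m \<in> Field K" using x that m by auto
    hence "(m,j) \<in> K \<or> (j,m) \<in> K" using K_total' by blast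
    thus ?thesis using mmin that by (cases "j = m") auto
  qed
  show ?thesis
  proof (cases "x m > 0")
    case True thus ?thesis unfolding posk_def using below by blast
  next
    case False hence "- x m > 0" using m by auto
    thus ?thesis unfolding posk_def using below by force
  qed
qed

lemma Gk_loag: "is_loag (Gk K)"
proof -
  let ?C = "{x::'k\<Rightarrow>int. \<forall>i. x i \<noteq> 0 \<longrightarrow> i \<in> Field K}"
  let ?G = "Gk K"
  have h1: "gzero ?G \<in> gcar ?G" by simp
  have h2: "\<forall>x\<in>gcar ?G. \<forall>y\<in>gcar ?G. gadd ?G x y \<in> gcar ?G" by auto (metis add.left_neutral)
  have h3: "\<forall>x\<in>gcar ?G. \<forall>y\<in>gcar ?G. \<forall>z\<in>gcar ?G. gadd ?G (gadd ?G x y) z = gadd ?G x (gadd ?G y z)"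
    by (simp add: add.assoc)
  have h4: "\<forall>x\<in>gcar ?G. \<forall>y\<in>gcar ?G. gadd ?G x y = gadd ?G y x" by (simp add: add.commute)
  have h5: "\<forall>x\<in>gcar ?G. gadd ?G (gzero ?G) x = x" by simp
  have h6: "\<forall>x\<in>gcar ?G. \<exists>y\<in>gcar ?G. gadd ?G x y = gzero ?G"
  proof
    fix x assume x: "x \<in> gcar ?G"
    show "\<exists>y\<in>gcar ?G. gadd ?G x y = gzero ?G"
      by (rule bexI[of _ "\<lambda>i. - x i"]) (use x in auto)
  qed
  have h7: "\<forall>x\<in>gcar ?G. gle ?G x x" by simp
  have h8: "\<forall>x\<in>gcar ?G. \<forall>y\<in>gcar ?G. gle ?G x y \<and> gle ?G y x \<longrightarrow> x = y"
  proof (intro ballI impI)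
    fix x y assume "x \<in> gcar ?G" "y \<in> gcar ?G" "gle ?G x y \<and> gle ?G y x"
    hence "x = y \<or> posk K (\<lambda>i. y i - x i)" "y = x \<or> posk K (\<lambda>i. x i - y i)" by auto
    thus "x = y" using posk_neg[of "\<lambda>i. y i - x i"] by auto
  qed
  have h9: "\<forall>x\<in>gcar ?G. \<forall>y\<in>gcar ?G. \<forall>z\<in>gcar ?G. gle ?G x y \<and> gle ?G y z \<longrightarrow> gle ?G x z"
  proof (intro ballI impI)
    fix x y z assume "x \<in> gcar ?G" "y \<in> gcar ?G" "z \<in> gcar ?G" "gle ?G x y \<and> gle ?G y z"
    hence a: "x = y \<or> posk K (\<lambda>i. y i - x i)" "y = z \<or> posk K (\<lambda>i. z i - y i)" by auto
    have "x = z \<or> posk K (\<lambda>i. z i - x i)"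
    proof (cases "x = y")
      case True thus ?thesis using a by auto
    next
      case False
      hence px: "posk K (\<lambda>i. y i - x i)" using a by auto
      show ?thesis
      proof (cases "y = z")
        case True thus ?thesis using px by auto
      next
        case False
        hence "posk K (\<lambda>i. z i - y i)" using a by auto
        from posk_add[OF this px] show ?thesis by simp
      qed
    qed
    thus "gle ?G x z" by simp
  qed
  have h10: "\<forall>x\<in>gcar ?G. \<forall>y\<in>gcar ?G. gle ?G x y \<or> gle ?G y x"
  proof (intro ballI)
    fix x y assume x: "x \<in> gcar ?G" and y: "y \<in> gcar ?G"
    show "gle ?G x y \<or> gle ?G y x"
    proof (cases "x = y")
      case True thus ?thesis by simp
    next
      case False
      hence nz: "(\<lambda>i. y i - x i) \<noteq> (\<lambda>i. 0)" by (metis eq_iff_diff_eq_0 ext)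
      have sup: "\<forall>i. y i - x i \<noteq> 0 \<longrightarrow> i \<in> Field K"
      proof (intro allI impI)
        fix i assume "y i - x i \<noteq> 0"
        hence "y i \<noteq> 0 \<or> x i \<noteq> 0" by auto
        thus "i \<in> Field K" using x y by auto
      qed
      have "posk K (\<lambda>i. y i - x i) \<or> posk K (\<lambda>i. - (y i - x i))" using posk_total[OF sup nz] .
      thus ?thesis by auto
    qed
  qed
  have h11: "\<forall>x\<in>gcar ?G. \<forall>y\<in>gcar ?G. \<forall>z\<in>gcar ?G. gle ?G x y \<longrightarrow> gle ?G (gadd ?G x z) (gadd ?G y z)"
    by auto
  show ?thesis unfolding is_loag_def using h1 h2 h3 h4 h5 h6 h7 h8 h9 h10 h11 by (intro conjI)
qed

lemma Gk_ns: "nsmul (Gk K) n x = (\<lambda>i. int n * x i)"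
  by (induction n) (auto simp: algebra_simps)

lemma Gk_gpos: "x \<in> gpos (Gk K) \<longleftrightarrow> (\<forall>i. x i \<noteq> 0 \<longrightarrow> i \<in> Field K) \<and> posk K x"
proof
  assume "x \<in> gpos (Gk K)"
  hence a: "\<forall>i. x i \<noteq> 0 \<longrightarrow> i \<in> Field K" "(\<lambda>i. 0) = x \<or> posk K (\<lambda>i. x i - 0)" "(\<lambda>i. 0) \<noteq> x"
    unfolding gpos_def glt_def by auto
  thus "(\<forall>i. x i \<noteq> 0 \<longrightarrow> i \<in> Field K) \<and> posk K x" by auto
next
  assume a: "(\<forall>i. x i \<noteq> 0 \<longrightarrow> i \<in> Field K) \<and> posk K x"
  then obtain i where "x i > 0" unfolding posk_def by blast
  hence "(\<lambda>i. 0) \<noteq> x" by (metis less_irrefl)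
  thus "x \<in> gpos (Gk K)" using a unfolding gpos_def glt_def by auto
qed

lemma L2:
  assumes x: "ldk K x i" and y: "ldk K y j" and ij: "(i,j) \<in> K" "i \<noteq> j"
  shows "glt (Gk K) (nsmul (Gk K) n y) x"
proof -
  have yi: "y i = 0"
  proof (rule ccontr)
    assume "y i \<noteq> 0" hence "(j,i) \<in> K" using y unfolding ldk_def by auto
    thus False using ij K_antisym' by blast
  qed
  have "ldk K (\<lambda>l. x l - int n * y l) i" unfolding ldk_def
  proof (intro conjI allI impI)
    show "0 < x i - int n * y i" using x yi unfolding ldk_def by simp
  next
    fix l assume "x l - int n * y l \<noteq> 0"
    hence "x l \<noteq> 0 \<or> y l \<noteq> 0" by auto
    thus "(i, l) \<in> K" using x y ij K_trans' unfolding ldk_def by blast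
  qed
  moreover have "(\<lambda>l. int n * y l) \<noteq> x" using x yi unfolding ldk_def by (metis less_irrefl mult_zero_right)
  ultimately show ?thesis unfolding glt_def Gk_simps Gk_ns using posk_ldk by metis
qed

lemma ek_ldk: "a \<in> Field K \<Longrightarrow> ldk K (ek a) a"
  unfolding ldk_def ek_def using K_refl' by auto

lemma ek_gpos: "a \<in> Field K \<Longrightarrow> ek a \<in> gpos (Gk K)"
  unfolding Gk_gpos using ek_ldk posk_ldk by (metis ek_def)

end




context includes cardinal_syntax begin

definition fk :: "'k rel \<Rightarrow> 'k \<Rightarrow> ('k \<Rightarrow> int) set option" where
  "fk K a = Some (arch_class (Gk K) (ek a))"

lemma distinct_cls:
  assumes W: "Well_order K" and ab: "a \<in> Field K" "b \<in> Field K" "(a,b) \<in> K" "a \<noteq> b"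
  shows "arc_le (Gk K) (arch_class (Gk K) (ek b)) (arch_class (Gk K) (ek a))
     \<and> arch_class (Gk K) (ek b) \<noteq> arch_class (Gk K) (ek a)"
proof
  have lt: "\<And>n. glt (Gk K) (nsmul (Gk K) n (ek b)) (ek a)"
    using L2[OF W ek_ldk[OF W ab(1)] ek_ldk[OF W ab(2)] ab(3,4)] .
  show "arc_le (Gk K) (arch_class (Gk K) (ek b)) (arch_class (Gk K) (ek a))"
    unfolding arc_le_def using lt ek_gpos[OF W] ab by blast
  show "arch_class (Gk K) (ek b) \<noteq> arch_class (Gk K) (ek a)"
  proof
    assume "arch_class (Gk K) (ek b) = arch_class (Gk K) (ek a)"
    hence "arch_eq (Gk K) (ek b) (ek a)" using class_eq_arch[OF Gk_loag[OF W]] ek_gpos[OF W] ab by blast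
    then obtain m where "gle (Gk K) (ek a) (nsmul (Gk K) m (ek b))" unfolding arch_eq_def by blast
    moreover have "gle (Gk K) (nsmul (Gk K) m (ek b)) (ek a)" "nsmul (Gk K) m (ek b) \<noteq> ek a"
      using lt[of m] unfolding glt_def by auto
    moreover have "ek a \<in> gcar (Gk K)" "nsmul (Gk K) m (ek b) \<in> gcar (Gk K)"
      using ek_gpos[OF W] ab gpos_car[OF Gk_loag[OF W]] ns_closed[OF Gk_loag[OF W]] by blast+
    ultimately show False using lg_antisym[OF Gk_loag[OF W]] by metis
  qed
qed

lemma fk_inj: assumes W: "Well_order K" shows "inj_on (fk K) (Field K)"
proof (rule inj_onI)
  fix a b assume ab: "a \<in> Field K" "b \<in> Field K" "fk K a = fk K b"
  show "a = b"
  proof (rule ccontr)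
    assume ne: "a \<noteq> b"
    have "(a,b) \<in> K \<or> (b,a) \<in> K" using K_total'[OF W] ab by blast
    thus False using distinct_cls[OF W] ab ne unfolding fk_def by (metis option.inject)
  qed
qed

lemma arc_gpos_class:
  assumes "t \<in> Arc_bot_carrier G - {None}"
  shows "\<exists>x\<in>gpos G. t = Some (arch_class G x)"
  using assms unfolding Arc_bot_carrier_def Arc_def by auto

lemma part2_chi:
  fixes K :: "'k rel"
  assumes CO: "Card_order K"
    and cases: "(finite (Field K) \<and> card (Field K) = 1) \<or> (infinite (Field K) \<and> regularCard K)"
  shows "is_chi (Arc_bot_carrier (Gk K)) (Arc_bot_le (Gk K)) None (dir_image K (fk K))
    \<and> (dir_image K (fk K), K) \<in> ordIso"
proof -
  let ?G = "Gk K"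
  let ?c = "dir_image K (fk K)"
  let ?S = "Arc_bot_carrier ?G"
  have W: "Well_order K" using CO unfolding card_order_on_def by auto
  have lg: "is_loag ?G" using Gk_loag[OF W] .
  have iso: "K =o ?c" using dir_image_ordIso[OF W fk_inj[OF W]] .
  hence iso': "?c =o K" using ordIso_symmetric by blast
  have COc: "Card_order ?c" using Card_order_ordIso2[OF CO iso] .
  have Fc: "Field ?c = fk K ` Field K" using dir_image_Field .
  have FKne: "Field K \<noteq> {}" using cases by auto
  have fkS: "fk K a \<in> ?S - {None}" if "a \<in> Field K" for a
    unfolding fk_def Arc_bot_carrier_def Arc_def using ek_gpos[OF W that] by auto
  have fam: "coinitial_family ?S (Arc_bot_le ?G) None ?c"
    unfolding coinitial_family_def
  proof (rule exI[of _ id], intro conjI)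
    show "id ` Field ?c \<subseteq> ?S - {None}" using Fc fkS by (auto simp: fk_def)
  next
    show "\<forall>\<alpha>\<in>Field ?c. \<forall>\<beta>\<in>Field ?c. (\<alpha>, \<beta>) \<in> ?c \<and> \<alpha> \<noteq> \<beta> \<longrightarrow> Arc_bot_le ?G (id \<beta>) (id \<alpha>) \<and> id \<beta> \<noteq> id \<alpha>"
    proof (intro ballI impI)
    fix \<alpha> \<beta> assume a: "\<alpha> \<in> Field ?c" "\<beta> \<in> Field ?c" "(\<alpha>, \<beta>) \<in> ?c \<and> \<alpha> \<noteq> \<beta>"
    then obtain a b where ab: "\<alpha> = fk K a" "\<beta> = fk K b" "(a,b) \<in> K" unfolding dir_image_def by auto
    have abF: "a \<in> Field K" "b \<in> Field K" using ab(3) by (auto intro: FieldI1 FieldI2)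
    have "a \<noteq> b" using a ab by auto
    thus "Arc_bot_le ?G (id \<beta>) (id \<alpha>) \<and> id \<beta> \<noteq> id \<alpha>"
      using distinct_cls[OF W abF ab(3)] ab unfolding fk_def by simp
    qed
  next
    show "\<forall>t\<in>?S - {None}. \<exists>\<alpha>\<in>Field ?c. Arc_bot_le ?G (id \<alpha>) t"
    proof
    fix t assume t: "t \<in> ?S - {None}"
    then obtain x where x: "x \<in> gpos ?G" "t = Some (arch_class ?G x)" using arc_gpos_class by blast
    have "posk K x" using x Gk_gpos[OF W] by blast
    then obtain i where i: "ldk K x i" using posk_ldk by metis
    have iF: "i \<in> Field K" using ldk_field[OF W i] .
    have "gle ?G (ek i) (nsmul ?G 2 x)"
    proof -
      have "ldk K (\<lambda>l. 2 * x l - ek i l) i" unfolding ldk_def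
      proof (intro conjI allI impI)
        show "0 < 2 * x i - ek i i" using i unfolding ldk_def ek_def by simp
      next
        fix l assume "2 * x l - ek i l \<noteq> 0"
        hence "x l \<noteq> 0 \<or> l = i" unfolding ek_def by (auto split: if_splits)
        thus "(i,l) \<in> K" using i K_refl'[OF W iF] unfolding ldk_def by auto
      qed
      thus ?thesis unfolding Gk_simps Gk_ns[OF W] using posk_ldk by (metis of_nat_numeral)
    qed
    hence "arc_le ?G (arch_class ?G (ek i)) (arch_class ?G x)"
      using arc_le_intro[OF lg ek_gpos[OF W iF] x(1), of 2] by simp
    hence "Arc_bot_le ?G (id (fk K i)) t" using x unfolding fk_def by simp
    thus "\<exists>\<alpha>\<in>Field ?c. Arc_bot_le ?G (id \<alpha>) t" using Fc iF by blast
    qed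
  qed
  have minim: "?c \<le>o \<mu>" if mu: "Card_order \<mu>" "Field \<mu> \<noteq> {}" "coinitial_family ?S (Arc_bot_le ?G) None \<mu>"
    for \<mu> :: "('k \<Rightarrow> int) set option rel"
  proof (cases "finite (Field K) \<and> card (Field K) = 1")
    case True
    then obtain a where a: "Field K = {a}" using card_1_singletonE by blast
    have "?c =o |Field ?c|" using card_of_Field_ordIso[OF COc] ordIso_symmetric by blast
    moreover have "Field ?c = {fk K a}" using Fc a by simp
    moreover have "|{fk K a}| \<le>o \<mu>" using Card_order_singl_ordLeq[OF mu(1) mu(2)] .
    ultimately show ?thesis using ordIso_ordLeq_trans by metis
  next
    case False
    hence inf: "infinite (Field K)" and reg: "regularCard K" using cases by auto
    obtain s where sS: "s ` Field \<mu> \<subseteq> ?S - {None}"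
      and scoin0: "\<forall>t\<in>?S - {None}. \<exists>\<alpha>\<in>Field \<mu>. Arc_bot_le ?G (s \<alpha>) t"
      using mu(3) unfolding coinitial_family_def by (elim exE conjE) blast
    have scoin: "\<And>t. t \<in> ?S - {None} \<Longrightarrow> \<exists>\<alpha>\<in>Field \<mu>. Arc_bot_le ?G (s \<alpha>) t" using scoin0 by blast
    define g where "g \<alpha> = (SOME i. \<exists>x\<in>gpos ?G. s \<alpha> = Some (arch_class ?G x) \<and> ldk K x i)" for \<alpha>
    have gP: "\<exists>x\<in>gpos ?G. s \<alpha> = Some (arch_class ?G x) \<and> ldk K x (g \<alpha>)" if "\<alpha> \<in> Field \<mu>" for \<alpha>
    proof -
      have "s \<alpha> \<in> ?S - {None}" using sS that by (rule subsetD[OF _ imageI])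
      then obtain x where x: "x \<in> gpos ?G" "s \<alpha> = Some (arch_class ?G x)" using arc_gpos_class by blast
      then obtain i where "ldk K x i" using Gk_gpos[OF W] posk_ldk by metis
      hence "\<exists>i. \<exists>x\<in>gpos ?G. s \<alpha> = Some (arch_class ?G x) \<and> ldk K x i" using x by blast
      thus ?thesis unfolding g_def by (rule someI_ex)
    qed
    have gF: "g ` Field \<mu> \<subseteq> Field K" using gP ldk_field[OF W] by blast
    have cof: "cofinal (g ` Field \<mu>) K" unfolding cofinal_def
    proof
      fix a assume a: "a \<in> Field K"
      obtain a' where a': "a' \<in> Field K" "a \<noteq> a'" "(a,a') \<in> K" using infinite_Card_order_limit[OF CO inf a] by blast
      obtain \<alpha> where \<alpha>: "\<alpha> \<in> Field \<mu>" "Arc_bot_le ?G (s \<alpha>) (fk K a')" using scoin fkS a'(1) by blast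
      obtain x where x: "x \<in> gpos ?G" "s \<alpha> = Some (arch_class ?G x)" "ldk K x (g \<alpha>)" using gP \<alpha>(1) by blast
      have "arc_le ?G (arch_class ?G x) (arch_class ?G (ek a'))" using \<alpha> x unfolding fk_def by simp
      then obtain m where m: "m \<ge> 1" "gle ?G x (nsmul ?G m (ek a'))"
        using arc_le_imp[OF lg _ refl refl x(1) ek_gpos[OF W a'(1)]] by blast
      have ga: "(a', g \<alpha>) \<in> K"
      proof (rule ccontr)
        assume n: "(a', g \<alpha>) \<notin> K"
        have gaF: "g \<alpha> \<in> Field K" using ldk_field[OF W x(3)] .
        hence "(g \<alpha>, a') \<in> K" "g \<alpha> \<noteq> a'" using n K_total'[OF W] a'(1) K_refl'[OF W] by blast+
        hence lt: "glt ?G (nsmul ?G m (ek a')) x" using L2[OF W x(3) ek_ldk[OF W a'(1)]] by blast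
        have "x \<in> gcar ?G" "nsmul ?G m (ek a') \<in> gcar ?G"
          using x(1) ek_gpos[OF W a'(1)] gpos_car[OF lg] ns_closed[OF lg] by blast+
        thus False using lt m lg_antisym[OF lg] unfolding glt_def by metis
      qed
      have "(a, g \<alpha>) \<in> K" using K_trans'[OF W a'(3) ga] .
      moreover have "a \<noteq> g \<alpha>" using ga a'(2,3) K_antisym'[OF W] by blast
      ultimately show "\<exists>b\<in>g ` Field \<mu>. a \<noteq> b \<and> (a, b) \<in> K" using \<alpha>(1) by blast
    qed
    have "|g ` Field \<mu>| =o K" using reg gF cof unfolding regularCard_def by blast
    hence "K =o |g ` Field \<mu>|" using ordIso_symmetric by blast
    also have "|g ` Field \<mu>| \<le>o |Field \<mu>|" by (rule card_of_image)
    also have "|Field \<mu>| =o \<mu>" using card_of_Field_ordIso[OF mu(1)] .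
    finally have "K \<le>o \<mu>" .
    thus ?thesis using iso' ordIso_ordLeq_trans by blast
  qed
  have "is_chi ?S (Arc_bot_le ?G) None ?c"
    unfolding is_chi_def using COc Fc FKne fam minim by auto
  thus ?thesis using iso' by blast
qed

end



lemma part2_met:
  fixes X :: "'a topology" and K :: "'k rel"
  assumes W: "Well_order K" and a0: "a0 \<in> Field K" and disc: "discrete_topology (topspace X) = X"
  shows "Met X (Gk K) \<noteq> {}"
proof -
  define d where "d = (\<lambda>x y::'a. if x = y then (\<lambda>i::'k. 0::int) else ek a0)"
  have ekne: "ek a0 \<noteq> (\<lambda>i. 0)" unfolding ek_def by (metis one_neq_zero)
  have pe: "posk K (ek a0)" using ek_ldk[OF W a0] posk_ldk by metis
  have pe2: "posk K (\<lambda>i. ek a0 i + ek a0 i - ek a0 i)" using pe by simp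
  have pe3: "posk K (\<lambda>i. ek a0 i + ek a0 i)" using posk_add[OF W pe pe] .
  have ekc: "\<forall>i. ek a0 i \<noteq> 0 \<longrightarrow> i \<in> Field K" using a0 unfolding ek_def by auto
  have gm: "is_gmetric (Gk K) (topspace X) d"
    unfolding is_gmetric_def Gk_simps d_def using ekne pe pe2 pe3 ekc by auto
  have ball: "gball (Gk K) (topspace X) d x (ek a0) = {x}" if "x \<in> topspace X" for x
    unfolding gball_def glt_def d_def Gk_simps using that pe ekne by auto
  have "d \<in> Met X (Gk K)" unfolding Met_def
  proof (intro CollectI conjI gm allI)
    fix U
    have "openin X U \<longleftrightarrow> U \<subseteq> topspace X"
      using disc openin_discrete_topology by metis
    moreover have "(\<forall>x\<in>U. \<exists>r\<in>gpos (Gk K). gball (Gk K) (topspace X) d x r \<subseteq> U)" if "U \<subseteq> topspace X"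
      using ball ek_gpos[OF W a0] that by (metis empty_subsetI insert_subset subsetD)
    ultimately show "openin X U = (U \<subseteq> topspace X \<and> (\<forall>x\<in>U. \<exists>r\<in>gpos (Gk K). gball (Gk K) (topspace X) d x r \<subseteq> U))"
      by blast
  qed
  thus ?thesis by blast
qed



theorem proposition2p50:
  fixes X :: "'a topology"
  assumes "discrete_topology (topspace X) = X"
  shows "(\<forall>\<kappa> :: 'k rel. in_MG_via X \<kappa> TYPE('g) \<longrightarrow>
            ((finite (Field \<kappa>) \<and> card (Field \<kappa>) = 1) \<or> (infinite (Field \<kappa>) \<and> regularCard \<kappa>)))
       \<and> (\<forall>\<kappa> :: 'k rel. Card_order \<kappa> \<and>
            ((finite (Field \<kappa>) \<and> card (Field \<kappa>) = 1) \<or> (infinite (Field \<kappa>) \<and> regularCard \<kappa>))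
            \<longrightarrow> in_MG_via X \<kappa> TYPE('k \<Rightarrow> int))"
proof (intro conjI allI impI)
  fix \<kappa> :: "'k rel"
  assume "in_MG_via X \<kappa> TYPE('g)"
  then obtain G :: "'g loag" and c :: "'g set option rel" where lg: "is_loag G"
    and chi: "is_chi (Arc_bot_carrier G) (Arc_bot_le G) None c" and iso: "(c, \<kappa>) \<in> ordIso"
    unfolding in_MG_via_def by blast
  have trG: "\<And>a b d. a \<in> Arc_bot_carrier G - {None} \<Longrightarrow> b \<in> Arc_bot_carrier G - {None} \<Longrightarrow> d \<in> Arc_bot_carrier G - {None} \<Longrightarrow> Arc_bot_le G a b \<Longrightarrow> Arc_bot_le G b d \<Longrightarrow> Arc_bot_le G a d"
    using Arc_bot_trans[OF lg] by blast
  have cc: "(finite (Field c) \<and> card (Field c) = 1) \<or> (infinite (Field c) \<and> regularCard c)"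
    using chi_cases[OF trG chi] .
  have CO: "Card_order c" using chi unfolding is_chi_def by blast
  obtain f where f: "bij_betw f (Field c) (Field \<kappa>)"
    using card_of_cong[OF iso] card_of_ordIso by blast
  show "(finite (Field \<kappa>) \<and> card (Field \<kappa>) = 1) \<or> (infinite (Field \<kappa>) \<and> regularCard \<kappa>)"
  proof (cases "finite (Field c) \<and> card (Field c) = 1")
    case True
    thus ?thesis using f bij_betw_finite bij_betw_same_card by metis
  next
    case False
    hence inf: "infinite (Field c)" and reg: "regularCard c" using cc by auto
    have "infinite (Field \<kappa>)" using inf f bij_betw_finite by metis
    moreover have "regularCard \<kappa>"
      using regularCard_ordIso[OF iso _ reg] inf CO unfolding BNF_Cardinal_Arithmetic.cinfinite_def by blast
    ultimately show ?thesis by blast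
  qed
next
  fix \<kappa> :: "'k rel"
  assume k: "Card_order \<kappa> \<and>
            ((finite (Field \<kappa>) \<and> card (Field \<kappa>) = 1) \<or> (infinite (Field \<kappa>) \<and> regularCard \<kappa>))"
  have W: "Well_order \<kappa>" using k unfolding card_order_on_def by auto
  obtain a0 where a0: "a0 \<in> Field \<kappa>" using k by fastforce
  show "in_MG_via X \<kappa> TYPE('k \<Rightarrow> int)"
    unfolding in_MG_via_def
    using part2_chi[of \<kappa>] k Gk_loag[OF W] part2_met[OF W a0 assms] by blast
qed


end
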